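(* Fix a nondegenerate triangle $E=E_1E_2E_3$ in the real affine plane and use barycentric coordinates of points with respect to $E$. Call a "parallel triangle" any triangle $D=D_1D_2D_3$ whose sides $D_iD_j$ are parallel to $E_iE_j$; such $D$ is the image of $E$ (with $D_i\mapsto E_i$ reversed) under a homothety, i.e. there is a unique real $d\neq 0$ such that the homothety (or translation, when $d=1$) of ratio $d$ maps $D_i$ to $E_i$ for all $i$. If $(d_1,d_2,d_3)$, $d_1+d_2+d_3=1$, are the barycentric coordinates of the centroid of $D$, the barycentric coordinates of $D$ are $(\delta_1,\delta_2,\delta_3)=(d\,d_1,d\,d_2,d\,d_3)$. For parallel triangles $A,B$ define the pre-sum $C=A\boxplus B$ by $C_k=A_iB_j\cap A_jB_i$ for each permutation $(i,j,k)$ of $(1,2,3)$, and define the sum $A+B$ as the triangle obtained from $C$ by the point reflection in the centroid of $C$ (keeping vertex labels). Let $A,B$ be parallel triangles with barycentric coordinates $(\alpha_1,\alpha_2,\alpha_3)$ and $(\beta_1,\beta_2,\beta_3)$ such that the points $C_1,C_2,C_3$ are well defined points of the affine plane forming a nondegenerate triangle. Then $A+B$ is a parallel triangle whose barycentric coordinates are $(\alpha_1+\beta_1,\alpha_2+\beta_2,\alpha_3+\beta_3)$.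
   Context: Barycentric coordinates of a point $X$ with respect to $E$ are the reals $(x_1,x_2,x_3)$ with $x_1+x_2+x_3=1$ and $X=x_1E_1+x_2E_2+x_3E_3$. The centroid of a triangle is the mean of its vertices. *)

theory Defs
  imports "HOL-Analysis.Analysis"
begin

text \<open>Triangles are labelled by the three-element type 3 (vertices 0,1,2 stand for 1,2,3).\<close>

definition nondeg_tri :: "(3 \<Rightarrow> real^2) \<Rightarrow> bool" where
  "nondeg_tri T \<longleftrightarrow> \<not> collinear (range T)"

definition bary :: "(3 \<Rightarrow> real^2) \<Rightarrow> real^2 \<Rightarrow> (3 \<Rightarrow> real)" where
  "bary E X = (THE x. sum x UNIV = 1 \<and> X = (\<Sum>i\<in>UNIV. x i *\<^sub>R E i))"

definition tri_centroid :: "(3 \<Rightarrow> real^2) \<Rightarrow> real^2" where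
  "tri_centroid D = (1/3) *\<^sub>R (\<Sum>i\<in>UNIV. D i)"

definition parallel_tri :: "(3 \<Rightarrow> real^2) \<Rightarrow> (3 \<Rightarrow> real^2) \<Rightarrow> bool" where
  "parallel_tri E D \<longleftrightarrow> nondeg_tri D \<and>
     (\<forall>i j. i \<noteq> j \<longrightarrow> (\<exists>t. D i - D j = t *\<^sub>R (E i - E j)))"

definition hratio :: "(3 \<Rightarrow> real^2) \<Rightarrow> (3 \<Rightarrow> real^2) \<Rightarrow> real" where
  "hratio E D = (THE d. d \<noteq> 0 \<and> (\<forall>i j. E i - E j = d *\<^sub>R (D i - D j)))"

definition tri_coords :: "(3 \<Rightarrow> real^2) \<Rightarrow> (3 \<Rightarrow> real^2) \<Rightarrow> (3 \<Rightarrow> real)" where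
  "tri_coords E D = (\<lambda>i. hratio E D * bary E (tri_centroid D) i)"

end

theory Submission
  imports Defs
begin


lemma range3: "range (T::3 \<Rightarrow> 'a) = {T 1, T 2, T 3}"
  by (simp add: UNIV_3)

lemma indep2:
  fixes E :: "3 \<Rightarrow> real^2"
  assumes "nondeg_tri E" and "\<alpha> *\<^sub>R (E 1 - E 3) + \<beta> *\<^sub>R (E 2 - E 3) = 0"
  shows "\<alpha> = 0 \<and> \<beta> = 0"
proof -
  have nc: "\<not> collinear {E 2, E 1, E 3}" using assms(1) unfolding nondeg_tri_def range3
    by (simp add: insert_commute)
  show ?thesis
  proof (cases "\<alpha> = 0")
    case True
    then have "\<beta> = 0 \<or> E 2 = E 3" using assms(2) by auto
    moreover have "E 2 \<noteq> E 3" using nc by (auto simp: insert_commute collinear_2)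
    ultimately show ?thesis using True by auto
  next
    case False
    have "E 1 = (-\<beta>/\<alpha>) *\<^sub>R E 2 + (1 - (-\<beta>/\<alpha>)) *\<^sub>R E 3"
    proof -
      have "\<alpha> *\<^sub>R (E 1 - E 3) = - \<beta> *\<^sub>R (E 2 - E 3)" using assms(2) by (simp add: algebra_simps eq_neg_iff_add_eq_0)
      then have "E 1 - E 3 = (-\<beta>/\<alpha>) *\<^sub>R (E 2 - E 3)" using False
        by (metis (no_types, lifting) divide_inverse_commute inverse_eq_divide right_inverse scaleR_one scaleR_scaleR)
      then show ?thesis by (simp add: algebra_simps)
    qed
    then have "collinear {E 2, E 1, E 3}" using collinear_3_expand by blast
    then show ?thesis using nc by blast
  qed
qed

lemma span2:
  fixes E :: "3 \<Rightarrow> real^2"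
  assumes "nondeg_tri E"
  shows "\<exists>x y. X - E 3 = x *\<^sub>R (E 1 - E 3) + y *\<^sub>R (E 2 - E 3)"
proof -
  have nc: "\<not> collinear {E 3, E 1, E 2}" using assms(1) unfolding nondeg_tri_def range3
    by (simp add: insert_commute)
  then have d: "E 3 \<noteq> E 1" "E 3 \<noteq> E 2" "E 1 \<noteq> E 2" "\<not> affine_dependent (insert (E 3) {E 1, E 2})"
    using collinear_3_eq_affine_dependent by auto
  then have ind: "\<not> dependent {E 1 - E 3, E 2 - E 3}"
    using affine_dependent_iff_dependent[of "E 3" "{E 1, E 2}"] by simp
  have c: "card {E 1 - E 3, E 2 - E 3} = dim (UNIV :: (real^2) set)"
    using d by simp
  have "UNIV \<subseteq> span {E 1 - E 3, E 2 - E 3}"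
    using card_eq_dim[OF _ c] ind by simp
  then have "X - E 3 \<in> span {E 1 - E 3, E 2 - E 3}" by auto
  then show ?thesis unfolding span_breakdown_eq span_singleton
    by (auto simp: algebra_simps) (metis add.commute diff_eq_eq)
qed

lemma bary_eq:
  fixes E :: "3 \<Rightarrow> real^2"
  assumes "nondeg_tri E" "sum x UNIV = 1" "X = (\<Sum>i\<in>UNIV. x i *\<^sub>R E i)"
  shows "bary E X = x"
  unfolding bary_def
proof (rule the_equality)
  show "sum x UNIV = 1 \<and> X = (\<Sum>i\<in>UNIV. x i *\<^sub>R E i)" using assms by simp
next
  fix y assume y: "sum y UNIV = 1 \<and> X = (\<Sum>i\<in>UNIV. y i *\<^sub>R E i)"
  have s: "x 1 + x 2 + x 3 = 1" "y 1 + y 2 + y 3 = 1" using assms(2) y by (simp_all add: sum_3)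
  have "(\<Sum>i\<in>UNIV. x i *\<^sub>R E i) = (\<Sum>i\<in>UNIV. y i *\<^sub>R E i)" using assms(3) y by simp
  then have e: "x 1 *\<^sub>R E 1 + x 2 *\<^sub>R E 2 + x 3 *\<^sub>R E 3 = y 1 *\<^sub>R E 1 + y 2 *\<^sub>R E 2 + y 3 *\<^sub>R E 3"
    by (simp add: sum_3)
  have x3: "x 3 = 1 - x 1 - x 2" and y3: "y 3 = 1 - y 1 - y 2" using s by auto
  have "(y 1 - x 1) *\<^sub>R (E 1 - E 3) + (y 2 - x 2) *\<^sub>R (E 2 - E 3) = 0"
    using e unfolding x3 y3 by (simp add: algebra_simps)
  then have "y 1 - x 1 = 0 \<and> y 2 - x 2 = 0" using indep2[OF assms(1)] by blast
  then have "y 1 = x 1" "y 2 = x 2" "y 3 = x 3" using x3 y3 by auto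
  then show "y = x" by (metis exhaust_3 ext)
qed

lemma bary_ex:
  fixes E :: "3 \<Rightarrow> real^2"
  assumes "nondeg_tri E"
  shows "\<exists>x. sum x UNIV = 1 \<and> X = (\<Sum>i\<in>UNIV. x i *\<^sub>R E i)"
proof -
  obtain a b where ab: "X - E 3 = a *\<^sub>R (E 1 - E 3) + b *\<^sub>R (E 2 - E 3)" using span2[OF assms] by blast
  define x :: "3 \<Rightarrow> real" where "x = (\<lambda>i. if i = 1 then a else if i = 2 then b else 1 - a - b)"
  have "sum x UNIV = 1" by (simp add: sum_3 x_def)
  moreover have "X = (\<Sum>i\<in>UNIV. x i *\<^sub>R E i)"
    using ab by (simp add: sum_3 x_def algebra_simps)
  ultimately show ?thesis by blast
qed

lemma par_hom:
  fixes E A :: "3 \<Rightarrow> real^2"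
  assumes "nondeg_tri E" "parallel_tri E A"
  shows "\<exists>a p. a \<noteq> 0 \<and> (\<forall>i. A i = a *\<^sub>R E i + p)"
proof -
  obtain t13 where t13: "A 1 - A 3 = t13 *\<^sub>R (E 1 - E 3)" using assms(2) unfolding parallel_tri_def by force
  obtain t23 where t23: "A 2 - A 3 = t23 *\<^sub>R (E 2 - E 3)" using assms(2) unfolding parallel_tri_def by force
  obtain t12 where t12: "A 1 - A 2 = t12 *\<^sub>R (E 1 - E 2)" using assms(2) unfolding parallel_tri_def by force
  have "A 1 - A 3 = (A 1 - A 2) + (A 2 - A 3)" by simp
  then have "t13 *\<^sub>R (E 1 - E 3) = t12 *\<^sub>R (E 1 - E 2) + t23 *\<^sub>R (E 2 - E 3)" using t13 t12 t23 by simp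
  then have "(t13 - t12) *\<^sub>R (E 1 - E 3) + (t12 - t23) *\<^sub>R (E 2 - E 3) = 0"
    by (simp add: algebra_simps)
  then have "t13 - t12 = 0 \<and> t12 - t23 = 0" using indep2[OF assms(1)] by blast
  then have eq: "t12 = t13" "t23 = t13" by auto
  define p where "p = A 3 - t13 *\<^sub>R E 3"
  have all: "\<forall>i. A i = t13 *\<^sub>R E i + p"
  proof
    fix i :: 3
    show "A i = t13 *\<^sub>R E i + p"
      using exhaust_3[of i] t13 t23 eq unfolding p_def by (auto simp: algebra_simps)
  qed
  moreover have "t13 \<noteq> 0"
  proof
    assume "t13 = 0"
    then have "range A = {p}" using all by auto
    then show False using assms(2) unfolding parallel_tri_def nondeg_tri_def by simp
  qed
  ultimately show ?thesis by blast
qed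

lemma hratio_hom:
  fixes E T :: "3 \<Rightarrow> real^2"
  assumes "nondeg_tri E" "d \<noteq> 0" "\<forall>i. T i = d *\<^sub>R E i + r"
  shows "hratio E T = 1 / d"
  unfolding hratio_def
proof (rule the_equality)
  show "1 / d \<noteq> 0 \<and> (\<forall>i j. E i - E j = (1 / d) *\<^sub>R (T i - T j))"
    using assms(2,3) by (simp add: algebra_simps)
next
  fix d' assume h: "d' \<noteq> 0 \<and> (\<forall>i j. E i - E j = d' *\<^sub>R (T i - T j))"
  have ne: "E 1 - E 3 \<noteq> 0"
  proof
    assume "E 1 - E 3 = 0"
    then have "range E = {E 2, E 3}" by (auto simp: range3)
    then show False using assms(1) collinear_2 unfolding nondeg_tri_def by metis
  qed
  have h1: "E 1 - E 3 = d' *\<^sub>R (T 1 - T 3)" using h by blast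
  have h2: "T 1 - T 3 = d *\<^sub>R (E 1 - E 3)" using assms(3) by (simp add: algebra_simps)
  have "E 1 - E 3 = (d' * d) *\<^sub>R (E 1 - E 3)" using h1 h2 by simp
  then have "(d' * d - 1) *\<^sub>R (E 1 - E 3) = 0" by (metis scaleR_left_diff_distrib scaleR_one diff_self)
  then have "d' * d = 1" using ne by simp
  then show "d' = 1 / d" using assms(2) by (simp add: field_simps)
qed

lemma shift_in_hull:
  fixes P Q x :: "real^2"
  assumes "x \<in> affine hull {P, Q}"
  shows "x + (Q - P) \<in> affine hull {P, Q}"
proof -
  obtain u where "x = P + u *\<^sub>R (Q - P)" using assms unfolding affine_hull_2_alt by auto
  then have "x + (Q - P) = P + (u + 1) *\<^sub>R (Q - P)" by (simp add: algebra_simps)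
  then show ?thesis unfolding affine_hull_2_alt by auto
qed



theorem theorem5:
  fixes E A B C :: "3 \<Rightarrow> real^2"
  assumes "nondeg_tri E"
    and "parallel_tri E A" and "parallel_tri E B"
    and "\<forall>i j k. i \<noteq> j \<and> j \<noteq> k \<and> i \<noteq> k \<longrightarrow>
           A i \<noteq> B j \<and> A j \<noteq> B i \<and>
           affine hull {A i, B j} \<inter> affine hull {A j, B i} = {C k}"
    and "nondeg_tri C"
  shows "parallel_tri E (\<lambda>k. 2 *\<^sub>R tri_centroid C - C k) \<and>
         tri_coords E (\<lambda>k. 2 *\<^sub>R tri_centroid C - C k) =
           (\<lambda>i. tri_coords E A i + tri_coords E B i)"
proof -
  obtain a p where ap: "a \<noteq> 0" "\<forall>i. A i = a *\<^sub>R E i + p" using par_hom[OF assms(1,2)] by blast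
  obtain b q where bq: "b \<noteq> 0" "\<forall>i. B i = b *\<^sub>R E i + q" using par_hom[OF assms(1,3)] by blast
  have ab: "a + b \<noteq> 0"
  proof
    assume h: "a + b = 0"
    have I: "affine hull {A 1, B 2} \<inter> affine hull {A 2, B 1} = {C 3}" "A 1 \<noteq> B 2"
      using assms(4)[rule_format, of 1 2 3] by auto
    have hb: "b = - a" using h by simp
    have dir: "B 1 - A 2 = B 2 - A 1" using ap(2) bq(2) unfolding hb by (simp add: algebra_simps)
    have "C 3 \<in> affine hull {A 1, B 2}" "C 3 \<in> affine hull {A 2, B 1}" using I by auto
    then have "C 3 + (B 2 - A 1) \<in> affine hull {A 1, B 2} \<inter> affine hull {A 2, B 1}"
      using shift_in_hull[of "C 3" "A 1" "B 2"] shift_in_hull[of "C 3" "A 2" "B 1"] dir by auto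
    then have "C 3 + (B 2 - A 1) = C 3" using I by auto
    then show False using I by auto
  qed
  have Cv: "C k = (1/(a+b)) *\<^sub>R (b *\<^sub>R A i + a *\<^sub>R B j)"
    if ijk: "i \<noteq> j" "j \<noteq> k" "i \<noteq> k" for i j k
  proof -
    let ?z = "(1/(a+b)) *\<^sub>R (b *\<^sub>R A i + a *\<^sub>R B j)"
    have I: "affine hull {A i, B j} \<inter> affine hull {A j, B i} = {C k}" using assms(4) ijk by blast
    have z1: "?z = (b/(a+b)) *\<^sub>R A i + (a/(a+b)) *\<^sub>R B j" by (simp add: scaleR_right_distrib)
    have "b *\<^sub>R A i + a *\<^sub>R B j = b *\<^sub>R A j + a *\<^sub>R B i"
      using ap(2) bq(2) by (simp add: algebra_simps)
    then have z2: "?z = (b/(a+b)) *\<^sub>R A j + (a/(a+b)) *\<^sub>R B i"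
      by (simp add: scaleR_right_distrib)
    have s: "b/(a+b) + a/(a+b) = 1" using ab by (metis add.commute add_divide_distrib divide_self)
    have "?z \<in> affine hull {A i, B j}" unfolding affine_hull_2 using z1 s by blast
    moreover have "?z \<in> affine hull {A j, B i}" unfolding affine_hull_2 using z2 s by blast
    ultimately have "?z \<in> affine hull {A i, B j} \<inter> affine hull {A j, B i}" by (rule IntI)
    then show ?thesis unfolding I by simp
  qed
  define D where "D = (\<lambda>k. 2 *\<^sub>R tri_centroid C - C k)"
  define c where "c = a * b / (a + b)"
  define w where "w = (1/(a+b)) *\<^sub>R (b *\<^sub>R p + a *\<^sub>R q)"
  have c0: "c \<noteq> 0" using ap bq ab by (simp add: c_def)
  have Cgen: "(1/(a+b)) *\<^sub>R (b *\<^sub>R A i + a *\<^sub>R B j) = c *\<^sub>R (E i + E j) + w" for i j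
  proof -
    have "b *\<^sub>R A i + a *\<^sub>R B j = (a * b) *\<^sub>R (E i + E j) + (b *\<^sub>R p + a *\<^sub>R q)"
      using ap(2) bq(2) by (simp add: algebra_simps)
    then show ?thesis using ab by (simp add: c_def w_def scaleR_right_distrib)
  qed
  have C1: "C 1 = c *\<^sub>R (E 2 + E 3) + w" using Cv[of 2 3 1] Cgen by simp
  have C2: "C 2 = c *\<^sub>R (E 1 + E 3) + w" using Cv[of 1 3 2] Cgen by simp
  have C3: "C 3 = c *\<^sub>R (E 1 + E 2) + w" using Cv[of 1 2 3] Cgen by simp
  define S where "S = E 1 + E 2 + E 3"
  define r where "r = (c/3) *\<^sub>R S + w"
  have cC: "2 *\<^sub>R tri_centroid C = (4/3 * c) *\<^sub>R S + 2 *\<^sub>R w"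
    unfolding tri_centroid_def sum_3 C1 C2 C3 S_def by (simp add: vec_eq_iff field_simps)
  have Dk: "\<forall>k. D k = c *\<^sub>R E k + r"
  proof
    fix k :: 3
    have "D 1 = c *\<^sub>R E 1 + r" unfolding D_def cC C1 r_def S_def by (simp add: vec_eq_iff field_simps)
    moreover have "D 2 = c *\<^sub>R E 2 + r" unfolding D_def cC C2 r_def S_def by (simp add: vec_eq_iff field_simps)
    moreover have "D 3 = c *\<^sub>R E 3 + r" unfolding D_def cC C3 r_def S_def by (simp add: vec_eq_iff field_simps)
    ultimately show "D k = c *\<^sub>R E k + r" using exhaust_3[of k] by auto
  qed
  have par: "parallel_tri E D"
    unfolding parallel_tri_def
  proof
    show "nondeg_tri D" unfolding nondeg_tri_def
    proof
      assume "collinear (range D)"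
      then obtain u where u: "\<forall>x\<in>range D. \<forall>y\<in>range D. \<exists>t. x - y = t *\<^sub>R u"
        unfolding collinear_def by blast
      have "collinear (range C)" unfolding collinear_def
      proof (rule exI[of _ u], intro ballI)
        fix x y assume "x \<in> range C" "y \<in> range C"
        then obtain i j where ij: "x = C i" "y = C j" by auto
        obtain t where "D j - D i = t *\<^sub>R u" using u by blast
        moreover have "C i - C j = D j - D i" by (simp add: D_def)
        ultimately show "\<exists>t. x - y = t *\<^sub>R u" using ij by metis
      qed
      then show False using assms(5) unfolding nondeg_tri_def by blast
    qed
  next
    show "\<forall>i j. i \<noteq> j \<longrightarrow> (\<exists>t. D i - D j = t *\<^sub>R (E i - E j))"
      using Dk by (metis add_diff_cancel_right scaleR_right_diff_distrib)
  qed
  obtain \<alpha> where al: "sum \<alpha> UNIV = 1" "tri_centroid A = (\<Sum>i\<in>UNIV. \<alpha> i *\<^sub>R E i)"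
    using bary_ex[OF assms(1)] by blast
  obtain \<beta> where be: "sum \<beta> UNIV = 1" "tri_centroid B = (\<Sum>i\<in>UNIV. \<beta> i *\<^sub>R E i)"
    using bary_ex[OF assms(1)] by blast
  define \<gamma> where "\<gamma> = (\<lambda>i. c * (\<alpha> i / a + \<beta> i / b))"
  have gs: "sum \<gamma> UNIV = 1"
  proof -
    have "sum \<gamma> UNIV = c * (sum \<alpha> UNIV / a + sum \<beta> UNIV / b)"
      using ap(1) bq(1) by (simp add: \<gamma>_def sum_3 field_simps)
    also have "\<dots> = c * (1/a + 1/b)" using al(1) be(1) by simp
    also have "1/a + 1/b = (a+b)/(a*b)" using ap(1) bq(1) by (simp add: field_simps)
    also have "c * ((a+b)/(a*b)) = 1" unfolding c_def using ap(1) bq(1) ab by simp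
    finally show ?thesis .
  qed
  have cA: "tri_centroid A = a *\<^sub>R ((1/3) *\<^sub>R S) + p"
    unfolding tri_centroid_def sum_3 S_def using ap(2) by (simp add: vec_eq_iff field_simps)
  have cB: "tri_centroid B = b *\<^sub>R ((1/3) *\<^sub>R S) + q"
    unfolding tri_centroid_def sum_3 S_def using bq(2) by (simp add: vec_eq_iff field_simps)
  have cD: "tri_centroid D = c *\<^sub>R ((1/3) *\<^sub>R S) + r"
    unfolding tri_centroid_def sum_3 S_def using Dk by (simp add: vec_eq_iff field_simps)
  have gE: "tri_centroid D = (\<Sum>i\<in>UNIV. \<gamma> i *\<^sub>R E i)"
  proof -
    have "(\<Sum>i\<in>UNIV. \<gamma> i *\<^sub>R E i) = (c/a) *\<^sub>R (\<Sum>i\<in>UNIV. \<alpha> i *\<^sub>R E i) + (c/b) *\<^sub>R (\<Sum>i\<in>UNIV. \<beta> i *\<^sub>R E i)"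
      using ap(1) bq(1) by (simp add: \<gamma>_def sum_3 vec_eq_iff field_simps)
    also have "\<dots> = (c/a) *\<^sub>R tri_centroid A + (c/b) *\<^sub>R tri_centroid B" using al be by simp
    also have "\<dots> = tri_centroid D"
    proof -
      have ca: "c/a = b/(a+b)" unfolding c_def using ap(1) by simp
      have cb: "c/b = a/(a+b)" unfolding c_def using bq(1) by simp
      have X: "(c/a) *\<^sub>R tri_centroid A = c *\<^sub>R ((1/3) *\<^sub>R S) + (b/(a+b)) *\<^sub>R p"
        unfolding cA ca[symmetric] using ap(1) by (simp add: scaleR_right_distrib)
      have Y: "(c/b) *\<^sub>R tri_centroid B = c *\<^sub>R ((1/3) *\<^sub>R S) + (a/(a+b)) *\<^sub>R q"
        unfolding cB cb[symmetric] using bq(1) by (simp add: scaleR_right_distrib)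
      show ?thesis unfolding X Y cD r_def w_def using ab by (simp add: vec_eq_iff field_simps)
    qed
    finally show ?thesis by simp
  qed
  have bD: "bary E (tri_centroid D) = \<gamma>" by (rule bary_eq[OF assms(1) gs gE])
  have bA: "bary E (tri_centroid A) = \<alpha>" by (rule bary_eq[OF assms(1) al])
  have bB: "bary E (tri_centroid B) = \<beta>" by (rule bary_eq[OF assms(1) be])
  have "tri_coords E D = (\<lambda>i. tri_coords E A i + tri_coords E B i)"
    unfolding tri_coords_def hratio_hom[OF assms(1) c0 Dk] hratio_hom[OF assms(1) ap] hratio_hom[OF assms(1) bq]
      bD bA bB
    using c0 ap(1) bq(1) by (auto simp: \<gamma>_def field_simps)
  then show ?thesis using par unfolding D_def by simp
qed

end
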